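(* Let $(b_j)$ be a wide-$(s)$ sequence in a Banach space $X$. Then there exist bounded sequences $(f_j)$ and $(g_j)$ in $X^*$ such that (i) $f_i(b_j)=1$ for all $j\ge i$ and $f_i(b_j)=0$ for all $j<i$; (ii) $g_j(b_i)=1$ for all $j\ge i$ and $g_j(b_i)=0$ for all $j<i$.
   Context: A semi-normalized sequence $(b_j)$ (i.e. $0<\inf_j\|b_j\|\le\sup_j\|b_j\|<\infty$) is wide-$(s)$ if it is a basic sequence such that $\sum_j c_j$ converges whenever $\sum_j c_jb_j$ converges. *)

theory Defs
  imports "HOL-Analysis.Analysis"
begin

definition semi_normalized :: "(nat \<Rightarrow> 'a::real_normed_vector) \<Rightarrow> bool" where
  "semi_normalized b \<longleftrightarrow> 0 < (INF j. norm (b j)) \<and> bdd_above (range (\<lambda>j. norm (b j)))"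

definition basic_sequence :: "(nat \<Rightarrow> 'a::real_normed_vector) \<Rightarrow> bool" where
  "basic_sequence b \<longleftrightarrow>
     (\<forall>x \<in> closure (span (range b)). \<exists>!c :: nat \<Rightarrow> real. (\<lambda>j. c j *\<^sub>R b j) sums x)"

definition wide_s :: "(nat \<Rightarrow> 'a::real_normed_vector) \<Rightarrow> bool" where
  "wide_s b \<longleftrightarrow> semi_normalized b \<and> basic_sequence b \<and>
     (\<forall>c :: nat \<Rightarrow> real. summable (\<lambda>j. c j *\<^sub>R b j) \<longrightarrow> summable c)"

end

theory Submission
  imports Defs
begin

definition good_graph :: "real \<Rightarrow> ('a::real_normed_vector) set \<Rightarrow> ('a \<Rightarrow> real) \<Rightarrow> ('a \<times> real) set \<Rightarrow> bool" where
  "good_graph C Y \<phi> G \<longleftrightarrow> (0,0) \<in> G \<and>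
     (\<forall>x a y b. (x,a) \<in> G \<longrightarrow> (y,b) \<in> G \<longrightarrow> (x+y, a+b) \<in> G) \<and>
     (\<forall>r x a. (x,a) \<in> G \<longrightarrow> (r *\<^sub>R x, r * a) \<in> G) \<and>
     (\<forall>x a b. (x,a) \<in> G \<longrightarrow> (x,b) \<in> G \<longrightarrow> a = b) \<and>
     (\<forall>x a. (x,a) \<in> G \<longrightarrow> a \<le> C * norm x) \<and>
     (\<forall>y\<in>Y. (y, \<phi> y) \<in> G)"

lemma good_graph_extend:
  fixes G :: "('a::real_normed_vector \<times> real) set"
  assumes C0: "C \<ge> 0" and gg: "good_graph C Y \<phi> G" and x0: "x0 \<notin> fst ` G"
  shows "\<exists>G'. good_graph C Y \<phi> G' \<and> G \<subseteq> G' \<and> G' \<noteq> G"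
proof -
  note g = gg[unfolded good_graph_def]
  have add: "(x,a) \<in> G \<Longrightarrow> (y,b) \<in> G \<Longrightarrow> (x+y, a+b) \<in> G" for x a y b using g by blast
  have scl: "(x,a) \<in> G \<Longrightarrow> (r *\<^sub>R x, r * a) \<in> G" for x a r using g by blast
  have fnc: "(x,a) \<in> G \<Longrightarrow> (x,b) \<in> G \<Longrightarrow> a = b" for x a b using g by blast
  have bnd: "(x,a) \<in> G \<Longrightarrow> a \<le> C * norm x" for x a using g by blast
  have key: "a - C * norm (v - x0) \<le> C * norm (w + x0) - b" if "(v,a) \<in> G" "(w,b) \<in> G" for v a w b
  proof -
    have "a + b \<le> C * norm (v + w)" using bnd[OF add[OF that]] .
    also have "norm (v + w) \<le> norm (v - x0) + norm (w + x0)"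
      using norm_triangle_ineq[of "v - x0" "w + x0"] by simp
    moreover note C0
    ultimately have "C * norm (v + w) \<le> C * norm (v - x0) + C * norm (w + x0)"
      by (metis distrib_left mult_left_mono)
    with \<open>a + b \<le> _\<close> show ?thesis by linarith
  qed
  define S where "S = {a - C * norm (v - x0) | v a. (v,a) \<in> G}"
  define \<alpha> where "\<alpha> = Sup S"
  have z0: "(0,0) \<in> G" using gg unfolding good_graph_def by simp
  have Sne: "S \<noteq> {}" using z0 unfolding S_def by blast
  have Sbdd: "bdd_above S"
  proof (rule bdd_aboveI)
    fix s assume "s \<in> S"
    then obtain v a where "s = a - C * norm (v - x0)" "(v,a) \<in> G" unfolding S_def by blast
    then show "s \<le> C * norm (0 + x0) - 0" using key[OF _ z0] by simp
  qed
  have lo: "a - C * norm (v - x0) \<le> \<alpha>" if "(v,a) \<in> G" for v a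
  proof -
    have "a - C * norm (v - x0) \<in> S" unfolding S_def using that by blast
    then show ?thesis unfolding \<alpha>_def using Sbdd by (rule cSup_upper)
  qed
  have hi: "\<alpha> \<le> C * norm (w + x0) - b" if "(w,b) \<in> G" for w b
    unfolding \<alpha>_def
  proof (rule cSup_least[OF Sne])
    fix s assume "s \<in> S"
    then obtain v a where "s = a - C * norm (v - x0)" "(v,a) \<in> G" unfolding S_def by blast
    then show "s \<le> C * norm (w + x0) - b" using key[OF _ that] by simp
  qed
  define G' where "G' = {(v + t *\<^sub>R x0, a + t * \<alpha>) | v a t. (v,a) \<in> G}"
  have sub: "G \<subseteq> G'"
  proof
    fix p assume "p \<in> G"
    obtain v a where pv: "p = (v,a)" by (cases p)
    have "p = (v + 0 *\<^sub>R x0, a + 0 * \<alpha>)" using pv by simp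
    then show "p \<in> G'" unfolding G'_def using \<open>p \<in> G\<close> pv
      by (intro CollectI exI[of _ v] exI[of _ a] exI[of _ 0]) simp
  qed
  have "(x0, \<alpha>) = (0 + 1 *\<^sub>R x0, 0 + 1 * \<alpha>)" by simp
  then have new: "(x0, \<alpha>) \<in> G'" unfolding G'_def using z0
    by (intro CollectI exI[of _ 0] exI[of _ 0] exI[of _ 1]) simp
  have neq: "G' \<noteq> G" using new x0 by force
  have fnc': "a = b" if h1: "(x,a) \<in> G'" and h2: "(x,b) \<in> G'" for x a b
  proof -
    obtain v a1 t where 1: "x = v + t *\<^sub>R x0" "a = a1 + t * \<alpha>" "(v,a1) \<in> G" using h1 unfolding G'_def by force
    obtain w b1 s where 2: "x = w + s *\<^sub>R x0" "b = b1 + s * \<alpha>" "(w,b1) \<in> G" using h2 unfolding G'_def by force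
    have d: "(v - w, a1 - b1) \<in> G" using add[OF 1(3) scl[OF 2(3), of "-1"]] by simp
    have "t = s"
    proof (rule ccontr)
      assume "t \<noteq> s"
      have "(v - w) = (s - t) *\<^sub>R x0" using 1 2 by (simp add: algebra_simps)
      then have "x0 = (1/(s-t)) *\<^sub>R (v - w)" using \<open>t \<noteq> s\<close> by simp
      moreover have "((1/(s-t)) *\<^sub>R (v - w), (1/(s-t)) * (a1 - b1)) \<in> G" by (rule scl[OF d])
      ultimately have "(x0, (1/(s-t)) * (a1 - b1)) \<in> G" by simp
      then show False using x0 by force
    qed
    then have "v = w" using 1 2 by simp
    then show ?thesis using fnc[OF 1(3)] 2 \<open>t = s\<close> 1 by auto
  qed
  have bnd': "a \<le> C * norm x" if h1: "(x,a) \<in> G'" for x a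
  proof -
    obtain v a1 t where 1: "x = v + t *\<^sub>R x0" "a = a1 + t * \<alpha>" "(v,a1) \<in> G" using h1 unfolding G'_def by force
    consider "t = 0" | "t > 0" | "t < 0" by linarith
    then show ?thesis
    proof cases
      case 1 then show ?thesis using \<open>x = _\<close> \<open>a = _\<close> bnd[OF \<open>(v,a1) \<in> G\<close>] by simp
    next
      case 2
      have "\<alpha> \<le> C * norm ((1/t) *\<^sub>R v + x0) - (1/t) * a1" using hi[OF scl[OF 1(3), of "1/t"]] .
      also have "(1/t) *\<^sub>R v + x0 = (1/t) *\<^sub>R x" using 1 2 by (simp add: algebra_simps)
      finally have "\<alpha> \<le> C * ((1/t) * norm x) - (1/t) * a1" using 2 by simp
      then have "t * \<alpha> \<le> t * (C * ((1/t) * norm x) - (1/t) * a1)" using 2 by (simp add: mult_left_mono)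
      then show ?thesis using 1 2 by (simp add: algebra_simps)
    next
      case 3
      define s where "s = - t"
      have s: "s > 0" using 3 s_def by simp
      have "(1/s) * a1 - C * norm ((1/s) *\<^sub>R v - x0) \<le> \<alpha>" using lo[OF scl[OF 1(3), of "1/s"]] .
      also have "(1/s) *\<^sub>R v - x0 = (1/s) *\<^sub>R x" using 1 s s_def by (simp add: algebra_simps)
      finally have "(1/s) * a1 - C * ((1/s) * norm x) \<le> \<alpha>" using s by simp
      then have "s * ((1/s) * a1 - C * ((1/s) * norm x)) \<le> s * \<alpha>" using s by (simp add: mult_left_mono)
      then show ?thesis using 1 s s_def by (simp add: algebra_simps)
    qed
  qed
  have add': "(x+y, a+b) \<in> G'" if h1: "(x,a) \<in> G'" and h2: "(y,b) \<in> G'" for x a y b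
  proof -
    obtain v a1 t where 1: "x = v + t *\<^sub>R x0" "a = a1 + t * \<alpha>" "(v,a1) \<in> G" using h1 unfolding G'_def by force
    obtain w b1 s where 2: "y = w + s *\<^sub>R x0" "b = b1 + s * \<alpha>" "(w,b1) \<in> G" using h2 unfolding G'_def by force
    have "(x+y, a+b) = ((v+w) + (t+s) *\<^sub>R x0, (a1+b1) + (t+s) * \<alpha>)"
      using 1 2 by (simp add: algebra_simps)
    then show ?thesis unfolding G'_def using add[OF 1(3) 2(3)]
      by (intro CollectI exI[of _ "v+w"] exI[of _ "a1+b1"] exI[of _ "t+s"]) simp
  qed
  have scl': "(r *\<^sub>R x, r * a) \<in> G'" if h1: "(x,a) \<in> G'" for x a r
  proof -
    obtain v a1 t where 1: "x = v + t *\<^sub>R x0" "a = a1 + t * \<alpha>" "(v,a1) \<in> G" using h1 unfolding G'_def by force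
    have "(r *\<^sub>R x, r * a) = (r *\<^sub>R v + (r*t) *\<^sub>R x0, r * a1 + (r*t) * \<alpha>)"
      using 1 by (simp add: algebra_simps)
    then show ?thesis unfolding G'_def using scl[OF 1(3), of r]
      by (intro CollectI exI[of _ "r *\<^sub>R v"] exI[of _ "r*a1"] exI[of _ "r*t"]) simp
  qed
  have z0': "(0,0) \<in> G'" using sub z0 by blast
  have "\<forall>y\<in>Y. (y, \<phi> y) \<in> G" using gg by (simp add: good_graph_def)
  then have yin: "\<forall>y\<in>Y. (y, \<phi> y) \<in> G'" using sub by blast
  have "good_graph C Y \<phi> G'" unfolding good_graph_def
    apply (intro conjI)
    using z0' apply simp
    using add' apply blast
    using scl' apply blast
    using fnc' apply blast
    using bnd' apply blast
    using yin apply blast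
    done
  then show ?thesis using sub neq by (intro exI[of _ G'] conjI)
qed





lemma good_graph_0: "good_graph C Y \<phi> G \<Longrightarrow> (0,0) \<in> G"
  unfolding good_graph_def by blast
lemma good_graph_Y: "good_graph C Y \<phi> G \<Longrightarrow> y \<in> Y \<Longrightarrow> (y, \<phi> y) \<in> G"
  unfolding good_graph_def by blast
lemma good_graph_add: "good_graph C Y \<phi> G \<Longrightarrow> (x,a) \<in> G \<Longrightarrow> (y,b) \<in> G \<Longrightarrow> (x+y, a+b) \<in> G"
  unfolding good_graph_def by blast
lemma good_graph_scl: "good_graph C Y \<phi> G \<Longrightarrow> (x,a) \<in> G \<Longrightarrow> (r *\<^sub>R x, r * a) \<in> G"
  unfolding good_graph_def by blast
lemma good_graph_fnc: "good_graph C Y \<phi> G \<Longrightarrow> (x,a) \<in> G \<Longrightarrow> (x,b) \<in> G \<Longrightarrow> a = b"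
  unfolding good_graph_def by blast
lemma good_graph_bnd: "good_graph C Y \<phi> G \<Longrightarrow> (x,a) \<in> G \<Longrightarrow> a \<le> C * norm x"
  unfolding good_graph_def by blast

lemma hahn_banach:
  fixes Y :: "'a::real_normed_vector set" and \<phi> :: "'a \<Rightarrow> real"
  assumes C0: "C \<ge> 0" and Y: "subspace Y"
    and lin_add: "\<And>x y. x \<in> Y \<Longrightarrow> y \<in> Y \<Longrightarrow> \<phi> (x + y) = \<phi> x + \<phi> y"
    and lin_scl: "\<And>r x. x \<in> Y \<Longrightarrow> \<phi> (r *\<^sub>R x) = r * \<phi> x"
    and bd: "\<And>x. x \<in> Y \<Longrightarrow> \<bar>\<phi> x\<bar> \<le> C * norm x"
  shows "\<exists>F :: 'a \<Rightarrow>\<^sub>L real. norm F \<le> C \<and> (\<forall>x\<in>Y. blinfun_apply F x = \<phi> x)"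
proof -
  define A where "A = {G. good_graph C Y \<phi> G}"
  define G0 where "G0 = {(y, \<phi> y) | y. y \<in> Y}"
  have phi0: "\<phi> 0 = 0" using lin_scl[of 0 0] Y by (simp add: subspace_0)
  have memG0: "(x,a) \<in> G0 \<longleftrightarrow> x \<in> Y \<and> a = \<phi> x" for x a
    unfolding G0_def by blast
  have G0g: "good_graph C Y \<phi> G0" unfolding good_graph_def memG0
    using Y phi0 lin_add lin_scl abs_le_D1[OF bd]
    by (auto simp: subspace_0 subspace_add subspace_scale)
  then have G0A: "G0 \<in> A" unfolding A_def by simp
  have chainub: "\<exists>U\<in>A. \<forall>X\<in>Ch. X \<subseteq> U" if ch: "Ch \<in> chains A" for Ch
  proof (cases "Ch = {}")
    case True then show ?thesis using G0A by blast
  next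
    case False
    have inA: "X \<in> A" if "X \<in> Ch" for X using ch that unfolding chains_def by blast
    have cmp: "X \<subseteq> X' \<or> X' \<subseteq> X" if "X \<in> Ch" "X' \<in> Ch" for X X'
      using ch that unfolding chains_def chain_subset_def by blast
    have gX: "good_graph C Y \<phi> X" if "X \<in> Ch" for X using inA[OF that] A_def by simp
    have two: "\<exists>Z\<in>Ch. p \<in> Z \<and> q \<in> Z" if hh: "p \<in> \<Union>Ch" "q \<in> \<Union>Ch" for p q
    proof -
      obtain X X' where X: "X \<in> Ch" "p \<in> X" and X': "X' \<in> Ch" "q \<in> X'" using hh by blast
      consider "X \<subseteq> X'" | "X' \<subseteq> X" using cmp[OF X(1) X'(1)] by blast
      then show ?thesis using X X' by cases blast+
    qed
    obtain X0 where X0: "X0 \<in> Ch" using False by blast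
    have u0: "(0,0) \<in> \<Union>Ch" using good_graph_0[OF gX[OF X0]] X0 by blast
    have uY: "(y, \<phi> y) \<in> \<Union>Ch" if "y \<in> Y" for y using good_graph_Y[OF gX[OF X0] that] X0 by blast
    have uscl: "(r *\<^sub>R x, r * a) \<in> \<Union>Ch" if hh: "(x,a) \<in> \<Union>Ch" for r x a
    proof -
      obtain X where "X \<in> Ch" "(x,a) \<in> X" using hh by blast
      then show ?thesis using good_graph_scl[OF gX] by blast
    qed
    have ubnd: "a \<le> C * norm x" if hh: "(x,a) \<in> \<Union>Ch" for x a
    proof -
      obtain X where "X \<in> Ch" "(x,a) \<in> X" using hh by blast
      then show ?thesis using good_graph_bnd[OF gX] by blast
    qed
    have uadd: "(x+y, a+b) \<in> \<Union>Ch" if hh: "(x,a) \<in> \<Union>Ch" "(y,b) \<in> \<Union>Ch" for x a y b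
    proof -
      obtain Z where "Z \<in> Ch" "(x,a) \<in> Z" "(y,b) \<in> Z" using two[OF hh] by blast
      then show ?thesis using good_graph_add[OF gX] by blast
    qed
    have ufnc: "a = b" if hh: "(x,a) \<in> \<Union>Ch" "(x,b) \<in> \<Union>Ch" for x a b
    proof -
      obtain Z where "Z \<in> Ch" "(x,a) \<in> Z" "(x,b) \<in> Z" using two[OF hh] by blast
      then show ?thesis using good_graph_fnc[OF gX] by blast
    qed
    have "good_graph C Y \<phi> (\<Union>Ch)" unfolding good_graph_def
      apply (intro conjI)
      using u0 apply simp
      using uadd apply blast
      using uscl apply blast
      using ufnc apply blast
      using ubnd apply blast
      using uY apply blast
      done
    then show ?thesis unfolding A_def by blast
  qed
  have "\<forall>Ch\<in>chains A. \<exists>U\<in>A. \<forall>X\<in>Ch. X \<subseteq> U" using chainub by blast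
  from Zorn_Lemma2[OF this] obtain G where GA: "G \<in> A" and maxG0: "\<forall>X\<in>A. G \<subseteq> X \<longrightarrow> X = G"
    by blast
  have maxG: "\<And>X. X \<in> A \<Longrightarrow> G \<subseteq> X \<Longrightarrow> X = G" using maxG0 by blast
  have gG: "good_graph C Y \<phi> G" using GA A_def by simp
  have add: "(x,a) \<in> G \<Longrightarrow> (y,b) \<in> G \<Longrightarrow> (x+y, a+b) \<in> G" for x a y b
    using gG unfolding good_graph_def by blast
  have scl: "(x,a) \<in> G \<Longrightarrow> (r *\<^sub>R x, r * a) \<in> G" for x a r
    using gG unfolding good_graph_def by blast
  have fnc: "(x,a) \<in> G \<Longrightarrow> (x,b) \<in> G \<Longrightarrow> a = b" for x a b
    using gG unfolding good_graph_def by blast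
  have bnd: "(x,a) \<in> G \<Longrightarrow> a \<le> C * norm x" for x a
    using gG unfolding good_graph_def by blast
  have yin: "y \<in> Y \<Longrightarrow> (y, \<phi> y) \<in> G" for y
    using gG unfolding good_graph_def by blast
  have dom: "\<exists>a. (x,a) \<in> G" for x
  proof (rule ccontr)
    assume "\<nexists>a. (x, a) \<in> G"
    then have "x \<notin> fst ` G" by force
    from good_graph_extend[OF C0 gG this] obtain G' where
      G': "good_graph C Y \<phi> G'" "G \<subseteq> G'" "G' \<noteq> G" by blast
    have "G' \<in> A" using G'(1) by (simp add: A_def)
    then have "G' = G" using maxG G'(2) by blast
    then show False using G'(3) by contradiction
  qed
  define F where "F x = (THE a. (x,a) \<in> G)" for x
  have FG: "(x, F x) \<in> G" for x
  proof -
    obtain a where a: "(x,a) \<in> G" using dom by blast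
    show ?thesis unfolding F_def by (rule theI[of _ a]) (use a fnc in blast)+
  qed
  have Feq: "(x,a) \<in> G \<Longrightarrow> F x = a" for x a using FG fnc by blast
  have Fadd: "F (x + y) = F x + F y" for x y using Feq[OF add[OF FG FG]] .
  have Fscl: "F (r *\<^sub>R x) = r *\<^sub>R F x" for r x using Feq[OF scl[OF FG]] by simp
  have Fub: "F x \<le> C * norm x" for x using bnd[OF FG] .
  have Fabs: "norm (F x) \<le> C * norm x" for x
  proof -
    have "F (-x) = - F x" using Fscl[of "-1" x] by simp
    then have "- F x \<le> C * norm x" using Fub[of "-x"] by simp
    then show ?thesis using Fub[of x] by simp
  qed
  have bl: "bounded_linear F"
    by (rule bounded_linear_intro[where K = C]) (use Fadd Fscl Fabs in \<open>auto simp: mult.commute\<close>)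
  have "norm (Blinfun F) \<le> C"
    by (rule norm_blinfun_bound[OF C0]) (unfold bounded_linear_Blinfun_apply[OF bl], rule Fabs)
  moreover have "\<forall>x\<in>Y. blinfun_apply (Blinfun F) x = \<phi> x"
    using bounded_linear_Blinfun_apply[OF bl] Feq yin by simp
  ultimately show ?thesis by blast
qed

lemma subspace_closure_real:
  fixes S :: "'a::real_normed_vector set"
  assumes "subspace S" shows "subspace (closure S)"
  unfolding subspace_def
proof (intro conjI ballI allI)
  show "0 \<in> closure S" using assms closure_subset subspace_0 by blast
next
  fix x y assume "x \<in> closure S" "y \<in> closure S"
  then obtain u v where u: "\<And>n. u n \<in> S" "u \<longlonglongrightarrow> x" and v: "\<And>n. v n \<in> S" "v \<longlonglongrightarrow> y"
    unfolding closure_sequential by blast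
  have "\<And>n. u n + v n \<in> S" using u v assms subspace_add by blast
  moreover have "(\<lambda>n. u n + v n) \<longlonglongrightarrow> x + y" using u v by (intro tendsto_intros)
  ultimately show "x + y \<in> closure S" unfolding closure_sequential
    by (intro exI[of _ "\<lambda>n. u n + v n"] conjI allI)
next
  fix c :: real and x assume "x \<in> closure S"
  then obtain u where u: "\<And>n. u n \<in> S" "u \<longlonglongrightarrow> x"
    unfolding closure_sequential by blast
  have "\<And>n. c *\<^sub>R u n \<in> S" using u assms subspace_scale by blast
  moreover have "(\<lambda>n. c *\<^sub>R u n) \<longlonglongrightarrow> c *\<^sub>R x" using u by (intro tendsto_intros)
  ultimately show "c *\<^sub>R x \<in> closure S" unfolding closure_sequential
    by (intro exI[of _ "\<lambda>n. c *\<^sub>R u n"] conjI allI)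
qed

locale wides =
  fixes b :: "nat \<Rightarrow> 'a::banach"
  assumes W: "wide_s b"
begin

definition "Y = closure (span (range b))"
definition "Z = {c. summable (\<lambda>j. c j *\<^sub>R b j)}"
definition "P c n = (\<Sum>j<n. c j *\<^sub>R b j)"
definition "\<sigma> (c::nat \<Rightarrow> real) n = (\<Sum>j<n. c j)"
definition "T c = (\<Sum>j. c j *\<^sub>R b j)"
definition "nb c M \<longleftrightarrow> (\<forall>n. norm (P c n) + \<bar>\<sigma> c n\<bar> \<le> M)"
definition "coef y = (THE c. (\<lambda>j. c j *\<^sub>R b j) sums y)"
definition "\<delta> = (INF j. norm (b j))"

lemma delta_pos: "\<delta> > 0"
  using W[unfolded wide_s_def, THEN conjunct1] unfolding semi_normalized_def \<delta>_def by (rule conjunct1)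

lemma delta_le: "\<delta> \<le> norm (b j)"
proof -
  have "bdd_below (range (\<lambda>j. norm (b j)))" by (rule bdd_belowI[of _ 0]) auto
  then show ?thesis unfolding \<delta>_def by (rule cINF_lower) simp
qed

lemma Y_subspace: "subspace Y"
  unfolding Y_def by (intro subspace_closure_real subspace_span)

lemma Y_closed: "closed Y"
  unfolding Y_def by simp

lemma b_in_Y: "b j \<in> Y"
  unfolding Y_def by (rule closure_subset[THEN subsetD], rule span_base, rule rangeI)

lemma P_in_span: "P c n \<in> span (range b)"
  unfolding P_def by (intro span_sum span_scale span_base rangeI)

lemma sums_in_Y: "(\<lambda>j. c j *\<^sub>R b j) sums y \<Longrightarrow> y \<in> Y"
  unfolding Y_def sums_def closure_sequential
  using P_in_span by (intro exI[of _ "P c"] conjI allI) (auto simp: P_def[abs_def])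

lemma basic_seq: "basic_sequence b" using W[unfolded wide_s_def, THEN conjunct2, THEN conjunct1] .

lemma basic: "y \<in> Y \<Longrightarrow> \<exists>!c. (\<lambda>j. c j *\<^sub>R b j) sums y"
  using bspec[OF basic_seq[unfolded basic_sequence_def]] unfolding Y_def .

lemma uniq: "(\<lambda>j. c j *\<^sub>R b j) sums y \<Longrightarrow> (\<lambda>j. d j *\<^sub>R b j) sums y \<Longrightarrow> c = d"
  using basic[OF sums_in_Y] by (metis (no_types, lifting))

lemma coef_sums: "y \<in> Y \<Longrightarrow> (\<lambda>j. coef y j *\<^sub>R b j) sums y"
  unfolding coef_def using basic by (rule theI')

lemma coef_eq: "(\<lambda>j. c j *\<^sub>R b j) sums y \<Longrightarrow> coef y = c"
  by (rule uniq[OF coef_sums[OF sums_in_Y]])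

lemma wide: "summable (\<lambda>j. c j *\<^sub>R b j) \<Longrightarrow> summable c"
  using W[unfolded wide_s_def, THEN conjunct2, THEN conjunct2] by blast

lemma Z_sums: "c \<in> Z \<Longrightarrow> (\<lambda>j. c j *\<^sub>R b j) sums T c"
  unfolding Z_def T_def by (simp add: summable_sums)

lemma T_in_Y: "c \<in> Z \<Longrightarrow> T c \<in> Y"
  using Z_sums sums_in_Y by blast

lemma P_lim: "c \<in> Z \<Longrightarrow> P c \<longlonglongrightarrow> T c"
  using Z_sums unfolding sums_def P_def by blast

lemma nb_ex: "c \<in> Z \<Longrightarrow> \<exists>M. nb c M"
proof -
  assume c: "c \<in> Z"
  have "convergent (P c)" using P_lim[OF c] convergent_def by blast
  then obtain M1 where M1: "\<And>n. norm (P c n) \<le> M1" using convergent_imp_Bseq Bseq_def by (metis less_imp_le)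
  have "summable c" using c wide unfolding Z_def by blast
  then have "convergent (\<sigma> c)" unfolding \<sigma>_def summable_iff_convergent .
  then obtain M2 where M2: "\<And>n. norm (\<sigma> c n) \<le> M2" using convergent_imp_Bseq Bseq_def by (metis less_imp_le)
  have "nb c (M1 + M2)" unfolding nb_def using M1 M2 by (simp add: add_mono)
  then show ?thesis by blast
qed

lemma nb_nonneg: "nb c M \<Longrightarrow> 0 \<le> M"
  unfolding nb_def by (metis abs_ge_zero add_nonneg_nonneg norm_ge_zero order_trans)

lemma nb_mono: "nb c M \<Longrightarrow> M \<le> M' \<Longrightarrow> nb c M'"
  unfolding nb_def by (meson order_trans)

lemma nb_P: "nb c M \<Longrightarrow> norm (P c n) \<le> M"
  unfolding nb_def proof -
  assume "\<forall>n. norm (P c n) + \<bar>\<sigma> c n\<bar> \<le> M"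
  then have "norm (P c n) + \<bar>\<sigma> c n\<bar> \<le> M" by blast
  then show ?thesis using abs_ge_zero[of "\<sigma> c n"] by linarith
qed

lemma nb_sigma: "nb c M \<Longrightarrow> \<bar>\<sigma> c n\<bar> \<le> M"
  unfolding nb_def proof -
  assume "\<forall>n. norm (P c n) + \<bar>\<sigma> c n\<bar> \<le> M"
  then have "norm (P c n) + \<bar>\<sigma> c n\<bar> \<le> M" by blast
  then show ?thesis using norm_ge_zero[of "P c n"] by linarith
qed

lemma coeff_bd: "nb c M \<Longrightarrow> \<bar>c j\<bar> \<le> 2 * M / \<delta>"
proof -
  assume nb: "nb c M"
  have "c j *\<^sub>R b j = P c (Suc j) - P c j" unfolding P_def by simp
  then have "norm (c j *\<^sub>R b j) \<le> norm (P c (Suc j)) + norm (P c j)"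
    by (metis norm_triangle_ineq4)
  also have "\<dots> \<le> 2 * M" using nb_P[OF nb, of "Suc j"] nb_P[OF nb, of j] by simp
  finally have 1: "\<bar>c j\<bar> * norm (b j) \<le> 2 * M" by simp
  have "\<bar>c j\<bar> * \<delta> \<le> \<bar>c j\<bar> * norm (b j)" using delta_le by (simp add: mult_left_mono)
  then have "\<bar>c j\<bar> * \<delta> \<le> 2 * M" using 1 by linarith
  then show ?thesis using delta_pos by (simp add: pos_le_divide_eq)
qed

lemma T_bd: "c \<in> Z \<Longrightarrow> nb c M \<Longrightarrow> norm (T c) \<le> M"
  by (rule Lim_norm_ubound[OF trivial_limit_sequentially P_lim]) (auto intro!: always_eventually nb_P)

lemma P_diff: "P (\<lambda>j. c j - d j) n = P c n - P d n"
  unfolding P_def by (simp add: scaleR_diff_left sum_subtractf)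
lemma sigma_diff: "\<sigma> (\<lambda>j. c j - d j) n = \<sigma> c n - \<sigma> d n"
  unfolding \<sigma>_def by (rule sum_subtractf)
lemma P_scale: "P (\<lambda>j. r * c j) n = r *\<^sub>R P c n"
  unfolding P_def by (simp add: scaleR_sum_right)
lemma sigma_scale: "\<sigma> (\<lambda>j. r * c j) n = r * \<sigma> c n"
  unfolding \<sigma>_def by (rule sum_distrib_left[symmetric])

lemma nb_diff: "nb c M \<Longrightarrow> nb d M' \<Longrightarrow> nb (\<lambda>j. c j - d j) (M + M')"
  unfolding nb_def P_diff sigma_diff
proof (intro allI)
  fix n assume 1: "\<forall>n. norm (P c n) + \<bar>\<sigma> c n\<bar> \<le> M" and 2: "\<forall>n. norm (P d n) + \<bar>\<sigma> d n\<bar> \<le> M'"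
  have "norm (P c n - P d n) \<le> norm (P c n) + norm (P d n)" by (rule norm_triangle_ineq4)
  moreover have "\<bar>\<sigma> c n - \<sigma> d n\<bar> \<le> \<bar>\<sigma> c n\<bar> + \<bar>\<sigma> d n\<bar>" by (rule abs_triangle_ineq4)
  ultimately show "norm (P c n - P d n) + \<bar>\<sigma> c n - \<sigma> d n\<bar> \<le> M + M'" using 1 2
    by (smt (verit))
qed

lemma nb_scale: "nb c M \<Longrightarrow> nb (\<lambda>j. r * c j) (\<bar>r\<bar> * M)"
  unfolding nb_def P_scale sigma_scale
  by (simp add: abs_mult flip: distrib_left) (simp add: mult_left_mono)

lemma Z_diff: "c \<in> Z \<Longrightarrow> d \<in> Z \<Longrightarrow> (\<lambda>j. c j - d j) \<in> Z \<and> T (\<lambda>j. c j - d j) = T c - T d"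
proof -
  assume c: "c \<in> Z" and d: "d \<in> Z"
  have "(\<lambda>j. (c j - d j) *\<^sub>R b j) sums (T c - T d)"
    using sums_diff[OF Z_sums[OF c] Z_sums[OF d]] by (simp add: scaleR_diff_left)
  then show ?thesis unfolding Z_def T_def by (simp add: sums_iff)
qed

lemma Z_scale: "c \<in> Z \<Longrightarrow> (\<lambda>j. r * c j) \<in> Z \<and> T (\<lambda>j. r * c j) = r *\<^sub>R T c"
proof -
  assume c: "c \<in> Z"
  have "(\<lambda>j. (r * c j) *\<^sub>R b j) sums (r *\<^sub>R T c)"
    using sums_scaleR_right[OF Z_sums[OF c], of r] by simp
  then show ?thesis unfolding Z_def T_def by (simp add: sums_iff)
qed

lemma zero_Z: "(\<lambda>j. 0) \<in> Z" "T (\<lambda>j. 0) = 0" "nb (\<lambda>j. 0) 0"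
  by (auto simp: Z_def T_def nb_def P_def \<sigma>_def)

end

context wides
begin

lemma baire_ball: "\<exists>k::nat. \<exists>y0\<in>Y. \<exists>r>0. \<forall>y\<in>Y. dist y0 y < r \<longrightarrow> y \<in> closure (T ` {c\<in>Z. nb c (real k)})"
proof -
  define F where "F k = Y \<inter> closure (T ` {c\<in>Z. nb c (real k)})" for k :: nat
  have "closedin euclidean Y" using Y_closed[unfolded closed_closedin] .
  then have cm: "completely_metrizable_space (top_of_set Y)"
    by (rule completely_metrizable_space_closedin[OF completely_metrizable_space_euclidean])
  have cnt: "countable (range F)" by simp
  have clo: "closedin (top_of_set Y) (F k)" for k
    unfolding F_def by (rule closedin_closed_Int) simp
  have cover: "\<Union>(range F) = Y"
  proof
    show "\<Union>(range F) \<subseteq> Y" unfolding F_def by blast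
    show "Y \<subseteq> \<Union>(range F)"
    proof
      fix y assume y: "y \<in> Y"
      have cz: "coef y \<in> Z" unfolding Z_def mem_Collect_eq using sums_summable[OF coef_sums[OF y]] .
      have Tc: "T (coef y) = y" unfolding T_def using sums_unique[OF coef_sums[OF y]] by (rule sym)
      obtain M where M: "nb (coef y) M" using nb_ex[OF cz] by blast
      obtain k :: nat where "M \<le> real k" using real_arch_simple by blast
      then have nbk: "nb (coef y) (real k)" using nb_mono M by blast
      have "coef y \<in> {c\<in>Z. nb c (real k)}" using cz nbk by simp
      then have "T (coef y) \<in> T ` {c\<in>Z. nb c (real k)}" by (rule imageI)
      then have "y \<in> T ` {c\<in>Z. nb c (real k)}" unfolding Tc .
      then have "y \<in> closure (T ` {c\<in>Z. nb c (real k)})" by (rule closure_subset[THEN subsetD])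
      then have "y \<in> F k" unfolding F_def using y by (rule IntI[rotated])
      then show "y \<in> \<Union>(range F)" by blast
    qed
  qed
  have "\<exists>k. (top_of_set Y) interior_of (F k) \<noteq> {}"
  proof (rule ccontr)
    assume "\<not> (\<exists>k. (top_of_set Y) interior_of (F k) \<noteq> {})"
    then have empty: "(top_of_set Y) interior_of (F k) = {}" for k by blast
    have e1: "(top_of_set Y) interior_of \<Union>(range F) = {}"
    proof (rule Baire_category_alt)
      show "completely_metrizable_space (top_of_set Y) \<or> locally_compact_space (top_of_set Y) \<and> regular_space (top_of_set Y)"
        using cm by (rule disjI1)
      show "countable (range F)" by (rule cnt)
      fix S assume "S \<in> range F"
      then obtain k where Sk: "S = F k" by blast
      show "closedin (top_of_set Y) S \<and> (top_of_set Y) interior_of S = {}"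
        unfolding Sk using clo[of k] empty[of k] by (rule conjI)
    qed
    have e2: "0 \<in> Y" using Y_subspace subspace_0 by blast
    have "topspace (top_of_set Y) = Y" by (rule topspace_euclidean_subtopology)
    then have e3: "(top_of_set Y) interior_of Y = Y" using interior_of_topspace by metis
    show False using e1 e2 e3 cover by (metis empty_iff)
  qed
  then obtain k where ne: "(top_of_set Y) interior_of (F k) \<noteq> {}" by blast
  then obtain y0 where y0: "y0 \<in> (top_of_set Y) interior_of (F k)" by blast
  have "openin (top_of_set Y) ((top_of_set Y) interior_of (F k))" by (rule openin_interior_of)
  from this[unfolded openin_open] obtain V where V: "open V" "(top_of_set Y) interior_of (F k) = Y \<inter> V"
    by (elim exE conjE)
  have y0Y: "y0 \<in> Y \<inter> V" using y0 unfolding V(2) .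
  obtain r where r: "r > 0" "ball y0 r \<subseteq> V" using open_contains_ball_eq[OF V(1)] y0Y by blast
  have "\<forall>y\<in>Y. dist y0 y < r \<longrightarrow> y \<in> closure (T ` {c\<in>Z. nb c (real k)})"
  proof (intro ballI impI)
    fix y assume yY: "y \<in> Y" and dy: "dist y0 y < r"
    have "y \<in> ball y0 r" using dy by (simp only: mem_ball)
    then have "y \<in> V" using r(2) by (rule subsetD[rotated])
    then have "y \<in> Y \<inter> V" using yY by (rule IntI[rotated])
    then have "y \<in> (top_of_set Y) interior_of (F k)" unfolding V(2) .
    then have "y \<in> F k" by (rule interior_of_subset[THEN subsetD])
    then show "y \<in> closure (T ` {c\<in>Z. nb c (real k)})" unfolding F_def by (rule IntD2)
  qed
  moreover have "y0 \<in> Y" using y0Y by blast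
  ultimately show ?thesis using r(1) by (intro exI[of _ k] bexI[of _ y0] exI[of _ r] conjI)
qed

lemma approx_small: "\<exists>k::nat. \<exists>r>0. \<forall>y\<in>Y. norm y < r \<longrightarrow> (\<forall>\<epsilon>>0. \<exists>c\<in>Z. nb c (2 * real k) \<and> norm (y - T c) < \<epsilon>)"
proof -
  obtain k :: nat and y0 r where y0: "y0 \<in> Y" and r: "r > 0"
    and H: "\<And>y. y \<in> Y \<Longrightarrow> dist y0 y < r \<Longrightarrow> y \<in> closure (T ` {c\<in>Z. nb c (real k)})"
    using baire_ball by blast
  have "\<forall>y\<in>Y. norm y < r \<longrightarrow> (\<forall>\<epsilon>>0. \<exists>c\<in>Z. nb c (2 * real k) \<and> norm (y - T c) < \<epsilon>)"
  proof (intro ballI impI allI)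
    fix y :: 'a and \<epsilon> :: real assume y: "y \<in> Y" "norm y < r" and e: "\<epsilon> > 0"
    have y0y: "y0 + y \<in> Y" using y0 y Y_subspace subspace_add by blast
    have "dist y0 (y0 + y) < r" using y by (simp add: dist_norm)
    then have "y0 + y \<in> closure (T ` {c\<in>Z. nb c (real k)})" using H y0y by blast
    then obtain z1 where z1: "z1 \<in> T ` {c\<in>Z. nb c (real k)}" "dist z1 (y0 + y) < \<epsilon>/2"
      using e unfolding closure_approachable by (meson half_gt_zero)
    have "y0 \<in> closure (T ` {c\<in>Z. nb c (real k)})" using H y0 r by simp
    then obtain z2 where z2: "z2 \<in> T ` {c\<in>Z. nb c (real k)}" "dist z2 y0 < \<epsilon>/2"
      using e unfolding closure_approachable by (meson half_gt_zero)
    obtain c1 where c1: "c1 \<in> Z" "nb c1 (real k)" "z1 = T c1" using z1(1) by blast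
    obtain c2 where c2: "c2 \<in> Z" "nb c2 (real k)" "z2 = T c2" using z2(1) by blast
    define c where "c = (\<lambda>j. c1 j - c2 j)"
    have cZ: "c \<in> Z" and Tc: "T c = T c1 - T c2" using Z_diff[OF c1(1) c2(1)] unfolding c_def by blast+
    have nbc: "nb c (2 * real k)" using nb_diff[OF c1(2) c2(2)] unfolding c_def by simp
    have "y - T c = (y0 + y - T c1) - (y0 - T c2)" using Tc by (simp add: algebra_simps)
    then have "norm (y - T c) \<le> norm (y0 + y - T c1) + norm (y0 - T c2)"
      by (metis norm_triangle_ineq4)
    also have "\<dots> < \<epsilon>/2 + \<epsilon>/2" using z1(2) z2(2) c1(3) c2(3)
      by (simp add: dist_norm norm_minus_commute add_strict_mono)
    finally show "\<exists>c\<in>Z. nb c (2 * real k) \<and> norm (y - T c) < \<epsilon>" using cZ nbc by auto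
  qed
  then show ?thesis using r by blast
qed

lemma approx_all: "\<exists>K>0. \<forall>y\<in>Y. \<forall>\<epsilon>>0. \<exists>c\<in>Z. nb c (K * norm y) \<and> norm (y - T c) < \<epsilon>"
proof -
  obtain k :: nat and r where r: "r > 0"
    and H: "\<And>y \<epsilon>. y \<in> Y \<Longrightarrow> norm y < r \<Longrightarrow> \<epsilon> > 0 \<Longrightarrow> \<exists>c\<in>Z. nb c (2 * real k) \<and> norm (y - T c) < \<epsilon>"
    using approx_small by blast
  define K where "K = 4 * (real k + 1) / r"
  have K: "K > 0" unfolding K_def using r by simp
  have "\<forall>y\<in>Y. \<forall>\<epsilon>>0. \<exists>c\<in>Z. nb c (K * norm y) \<and> norm (y - T c) < \<epsilon>"
  proof (intro ballI allI impI)
    fix y :: 'a and \<epsilon> :: real assume y: "y \<in> Y" and e: "\<epsilon> > 0"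
    show "\<exists>c\<in>Z. nb c (K * norm y) \<and> norm (y - T c) < \<epsilon>"
    proof (cases "y = 0")
      case True
      then show ?thesis using zero_Z e by (intro bexI[of _ "\<lambda>j. 0"]) auto
    next
      case False
      then have ny: "norm y > 0" by simp
      define s where "s = r / (2 * norm y)"
      have s: "s > 0" unfolding s_def using r ny by simp
      have ys: "s *\<^sub>R y \<in> Y" using y Y_subspace subspace_scale by blast
      have "norm (s *\<^sub>R y) = r / 2" unfolding s_def using ny s r by simp
      then have "norm (s *\<^sub>R y) < r" using r by simp
      then obtain c' where c': "c' \<in> Z" "nb c' (2 * real k)" "norm (s *\<^sub>R y - T c') < s * \<epsilon>"
        using H[OF ys _ mult_pos_pos[OF s e]] by blast
      define c where "c = (\<lambda>j. (1/s) * c' j)"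
      have cZ: "c \<in> Z" and Tc: "T c = (1/s) *\<^sub>R T c'" using Z_scale[OF c'(1), of "1/s"] unfolding c_def by auto
      have "nb c (\<bar>1/s\<bar> * (2 * real k))" unfolding c_def by (rule nb_scale[OF c'(2)])
      moreover have "\<bar>1/s\<bar> * (2 * real k) \<le> K * norm y"
      proof -
        have "\<bar>1/s\<bar> * (2 * real k) = 4 * real k * norm y / r" unfolding s_def using r ny by simp
        also have "\<dots> \<le> 4 * (real k + 1) * norm y / r" using r ny
          by (intro divide_right_mono mult_right_mono) auto
        finally show ?thesis unfolding K_def by simp
      qed
      ultimately have nbc: "nb c (K * norm y)" using nb_mono by blast
      have "y - T c = (1/s) *\<^sub>R (s *\<^sub>R y - T c')" using Tc s by (simp add: algebra_simps)
      then have "norm (y - T c) = (1/s) * norm (s *\<^sub>R y - T c')" using s by simp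
      also have "\<dots> < (1/s) * (s * \<epsilon>)" using c'(3) s by (intro mult_strict_left_mono) auto
      also have "\<dots> = \<epsilon>" using s by simp
      finally show ?thesis using cZ nbc by blast
    qed
  qed
  then show ?thesis using K by blast
qed

end

context wides
begin

lemma coef_zero: "coef 0 = (\<lambda>j. 0)"
  by (rule coef_eq) simp

lemma main_bound: "\<exists>M\<ge>0. \<forall>y\<in>Y. nb (coef y) (M * norm y)"
proof -
  obtain K where K: "K > 0" and HK: "\<And>y \<epsilon>. y \<in> Y \<Longrightarrow> \<epsilon> > 0 \<Longrightarrow> \<exists>c\<in>Z. nb c (K * norm y) \<and> norm (y - T c) < \<epsilon>"
    using approx_all by blast
  have "nb (coef y) (2 * K * norm y)" if y: "y \<in> Y" for y
  proof (cases "y = 0")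
    case True
    then show ?thesis using zero_Z(3) coef_zero by simp
  next
    case False
    define e where "e = norm y"
    have e: "e > 0" using False e_def by simp
    define pick where "pick m z = (SOME c. c \<in> Z \<and> nb c (K * norm z) \<and> norm (z - T c) < e * (1/2)^(Suc m))" for m z
    have pick: "pick m z \<in> Z \<and> nb (pick m z) (K * norm z) \<and> norm (z - T (pick m z)) < e * (1/2)^(Suc m)"
      if "z \<in> Y" for m z
    proof -
      have "\<exists>c. c \<in> Z \<and> nb c (K * norm z) \<and> norm (z - T c) < e * (1/2)^(Suc m)"
        using HK[OF that, of "e * (1/2)^(Suc m)"] e by auto
      then show ?thesis unfolding pick_def by (rule someI_ex)
    qed
    define r where "r = rec_nat y (\<lambda>m z. z - T (pick m z))"
    have r0: "r 0 = y" unfolding r_def by simp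
    have rS: "r (Suc m) = r m - T (pick m (r m))" for m unfolding r_def by simp
    have inv: "r m \<in> Y \<and> norm (r m) \<le> e * (1/2)^m" for m
    proof (induction m)
      case 0 then show ?case using r0 y e_def by simp
    next
      case (Suc m)
      then have rY: "r m \<in> Y" by blast
      note p = pick[OF rY, of m]
      have "r (Suc m) \<in> Y" unfolding rS using rY T_in_Y p Y_subspace subspace_diff by blast
      moreover have "norm (r (Suc m)) \<le> e * (1/2)^(Suc m)" unfolding rS using p by simp
      ultimately show ?case by blast
    qed
    define cm where "cm m = pick m (r m)" for m
    define a where "a m = K * e * (1/2)^m" for m
    have a_sums: "a sums (K * e * 2)"
      unfolding a_def using sums_mult[OF geometric_sums[of "1/2::real"], of "K * e"] by simp
    have a_summ: "summable a" using a_sums by (rule sums_summable)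
    have a_nn: "a m \<ge> 0" for m unfolding a_def using K e by simp
    have cmZ: "cm m \<in> Z" for m unfolding cm_def using pick[OF inv[THEN conjunct1]] by blast
    have cmnb: "nb (cm m) (a m)" for m
    proof -
      have "nb (cm m) (K * norm (r m))" unfolding cm_def using pick[OF inv[THEN conjunct1]] by blast
      moreover have "K * norm (r m) \<le> a m" unfolding a_def using inv[of m] K
        by (simp add: mult.assoc mult_left_mono)
      ultimately show ?thesis by (rule nb_mono)
    qed
    have tele: "y = (\<Sum>i<n. T (cm i)) + r n" for n
    proof (induction n)
      case 0 then show ?case using r0 by simp
    next
      case (Suc n) then show ?case using rS[of n] unfolding cm_def by simp
    qed
    have r_lim: "r \<longlonglongrightarrow> 0"
    proof (rule Lim_null_comparison)
      show "\<forall>\<^sub>F n in sequentially. norm (r n) \<le> e * (1/2)^n" using inv by (intro always_eventually) blast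
      show "(\<lambda>n. e * (1/2::real)^n) \<longlonglongrightarrow> 0"
        by (intro tendsto_mult_right_zero LIMSEQ_power_zero) simp
    qed
    have Tsums: "(\<lambda>m. T (cm m)) sums y"
    proof -
      have "(\<lambda>n. y - r n) \<longlonglongrightarrow> y - 0" using r_lim by (intro tendsto_intros)
      moreover have "(\<lambda>n. y - r n) = (\<lambda>n. \<Sum>i<n. T (cm i))"
        using tele by (metis add_diff_cancel_right')
      ultimately show ?thesis unfolding sums_def by simp
    qed
    have cbd: "\<bar>cm m j\<bar> \<le> 2 / \<delta> * a m" for m j
      using coeff_bd[OF cmnb[of m], of j] by simp
    have csum: "summable (\<lambda>m. cm m j)" for j
      by (rule summable_comparison_test'[of "\<lambda>m. 2 / \<delta> * a m" 0])
        (use summable_mult[OF a_summ] cbd in auto)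
    define c where "c j = (\<Sum>m. cm m j)" for j
    have Psum: "summable (\<lambda>m. P (cm m) n)" for n
      by (rule summable_comparison_test'[of a 0]) (use a_summ nb_P[OF cmnb] in auto)
    have Pn: "summable (\<lambda>m. norm (P (cm m) n))" for n
      by (rule summable_comparison_test'[of a 0]) (use a_summ nb_P[OF cmnb] in auto)
    have Ssum: "summable (\<lambda>m. \<sigma> (cm m) n)" for n
      by (rule summable_comparison_test'[of a 0]) (use a_summ nb_sigma[OF cmnb] in auto)
    have Sn: "summable (\<lambda>m. \<bar>\<sigma> (cm m) n\<bar>)" for n
      by (rule summable_comparison_test'[of a 0]) (use a_summ nb_sigma[OF cmnb] in auto)
    have Pc: "P c n = (\<Sum>m. P (cm m) n)" for n
    proof -
      have "P c n = (\<Sum>j<n. \<Sum>m. cm m j *\<^sub>R b j)"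
        unfolding P_def c_def by (intro sum.cong refl suminf_scaleR_left[OF csum])
      also have "\<dots> = (\<Sum>m. \<Sum>j<n. cm m j *\<^sub>R b j)"
        by (rule suminf_sum[symmetric]) (rule summable_scaleR_left[OF csum])
      finally show ?thesis unfolding P_def .
    qed
    have Sc: "\<sigma> c n = (\<Sum>m. \<sigma> (cm m) n)" for n
    proof -
      have "\<sigma> c n = (\<Sum>j<n. \<Sum>m. cm m j)" unfolding \<sigma>_def c_def by simp
      also have "\<dots> = (\<Sum>m. \<Sum>j<n. cm m j)" by (rule suminf_sum[symmetric]) (rule csum)
      finally show ?thesis unfolding \<sigma>_def .
    qed
    have nbc: "nb c (2 * K * norm y)"
      unfolding nb_def
    proof
      fix n
      have "norm (P c n) \<le> (\<Sum>m. norm (P (cm m) n))" unfolding Pc by (rule summable_norm[OF Pn])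
      moreover have "\<bar>\<sigma> c n\<bar> \<le> (\<Sum>m. \<bar>\<sigma> (cm m) n\<bar>)"
        unfolding Sc using summable_norm[OF Sn[unfolded real_norm_def[symmetric]]] by simp
      moreover have "(\<Sum>m. norm (P (cm m) n)) + (\<Sum>m. \<bar>\<sigma> (cm m) n\<bar>) = (\<Sum>m. norm (P (cm m) n) + \<bar>\<sigma> (cm m) n\<bar>)"
        by (rule suminf_add[OF Pn Sn])
      moreover have "(\<Sum>m. norm (P (cm m) n) + \<bar>\<sigma> (cm m) n\<bar>) \<le> suminf a"
        by (rule suminf_le) (use cmnb[unfolded nb_def] summable_add[OF Pn Sn] a_summ in auto)
      moreover have "suminf a = 2 * K * norm y" using sums_unique[OF a_sums] e_def by simp
      ultimately show "norm (P c n) + \<bar>\<sigma> c n\<bar> \<le> 2 * K * norm y" by linarith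
    qed
    have Tsum: "summable (\<lambda>m. T (cm m))" using Tsums by (rule sums_summable)
    have Pdiff: "P c n - y = (\<Sum>m. P (cm m) n - T (cm m))" for n
      unfolding Pc using suminf_diff[OF Psum Tsum] sums_unique[OF Tsums] by simp
    have dsum: "summable (\<lambda>m. norm (P (cm m) n - T (cm m)))" for n
    proof (rule summable_comparison_test'[of "\<lambda>m. 2 * a m" 0])
      show "summable (\<lambda>m. 2 * a m)" using summable_mult[OF a_summ] .
      fix m :: nat
      have "norm (P (cm m) n - T (cm m)) \<le> norm (P (cm m) n) + norm (T (cm m))" by (rule norm_triangle_ineq4)
      also have "\<dots> \<le> 2 * a m" using nb_P[OF cmnb[of m], of n] T_bd[OF cmZ cmnb[of m]] by linarith
      finally show "norm (norm (P (cm m) n - T (cm m))) \<le> 2 * a m" by simp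
    qed
    have tan: "(\<lambda>n. \<Sum>m. norm (P (cm m) n - T (cm m))) \<longlonglongrightarrow> (\<Sum>m. (0::real))"
    proof (rule tannerys_theorem[THEN conjunct2, THEN conjunct2])
      show "\<And>k. (\<lambda>n. norm (P (cm k) n - T (cm k))) \<longlonglongrightarrow> 0"
        using P_lim[OF cmZ] by (intro tendsto_norm_zero LIM_zero)
      show "summable (\<lambda>m. 2 * a m)" using summable_mult[OF a_summ] .
      show "sequentially \<noteq> bot" by simp
      show "\<forall>\<^sub>F (k, n) in at_top \<times>\<^sub>F sequentially. norm (norm (P (cm k) n - T (cm k))) \<le> 2 * a k"
      proof (intro always_eventually allI)
        fix kn :: "nat \<times> nat"
        obtain k n where kn: "kn = (k, n)" by (cases kn)
        have "norm (P (cm k) n - T (cm k)) \<le> norm (P (cm k) n) + norm (T (cm k))" by (rule norm_triangle_ineq4)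
        also have "\<dots> \<le> 2 * a k" using nb_P[OF cmnb[of k], of n] T_bd[OF cmZ cmnb[of k]] by linarith
        finally show "case kn of (k, n) \<Rightarrow> norm (norm (P (cm k) n - T (cm k))) \<le> 2 * a k"
          unfolding kn by simp
      qed
    qed
    have "(\<lambda>n. P c n - y) \<longlonglongrightarrow> 0"
    proof (rule Lim_null_comparison)
      show "\<forall>\<^sub>F n in sequentially. norm (P c n - y) \<le> (\<Sum>m. norm (P (cm m) n - T (cm m)))"
        unfolding Pdiff by (intro always_eventually allI summable_norm dsum)
      show "(\<lambda>n. \<Sum>m. norm (P (cm m) n - T (cm m))) \<longlonglongrightarrow> 0" using tan by simp
    qed
    then have "P c \<longlonglongrightarrow> y" by (rule LIM_zero_cancel)
    then have "(\<lambda>j. c j *\<^sub>R b j) sums y" unfolding sums_def P_def[abs_def] .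
    then have "coef y = c" by (rule coef_eq)
    then show ?thesis using nbc by simp
  qed
  then show ?thesis using K by (intro exI[of _ "2 * K"]) auto
qed

end

context wides
begin

lemma coef_add: "x \<in> Y \<Longrightarrow> y \<in> Y \<Longrightarrow> coef (x + y) = (\<lambda>j. coef x j + coef y j)"
  by (rule coef_eq) (use sums_add[OF coef_sums coef_sums] in \<open>simp add: scaleR_add_left\<close>)

lemma coef_scale: "x \<in> Y \<Longrightarrow> coef (r *\<^sub>R x) = (\<lambda>j. r * coef x j)"
  by (rule coef_eq) (use sums_scaleR_right[OF coef_sums, of x r] in simp)

lemma coef_b: "coef (b i) = (\<lambda>j. if j = i then 1 else 0)"
proof (rule coef_eq)
  have "(\<lambda>j. (if j = i then 1 else 0) *\<^sub>R b j) = (\<lambda>j. if j = i then b j else 0)" by auto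
  then show "(\<lambda>j. (if j = i then 1 else 0) *\<^sub>R b j) sums b i" using sums_single[of i b] by simp
qed

definition "S y = suminf (coef y)"

lemma coef_summable: "y \<in> Y \<Longrightarrow> summable (coef y)"
  using wide sums_summable[OF coef_sums] by blast

lemma sigma_lim: "y \<in> Y \<Longrightarrow> \<sigma> (coef y) \<longlonglongrightarrow> S y"
  unfolding \<sigma>_def[abs_def] S_def using summable_LIMSEQ[OF coef_summable] by simp

lemma sigma_add: "x \<in> Y \<Longrightarrow> y \<in> Y \<Longrightarrow> \<sigma> (coef (x + y)) n = \<sigma> (coef x) n + \<sigma> (coef y) n"
  unfolding coef_add \<sigma>_def by (rule sum.distrib)

lemma sigma_scl: "x \<in> Y \<Longrightarrow> \<sigma> (coef (r *\<^sub>R x)) n = r * \<sigma> (coef x) n"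
  unfolding coef_scale \<sigma>_def by (rule sum_distrib_left[symmetric])

lemma S_add: "x \<in> Y \<Longrightarrow> y \<in> Y \<Longrightarrow> S (x + y) = S x + S y"
  unfolding S_def coef_add using suminf_add[OF coef_summable coef_summable] by simp

lemma S_scl: "x \<in> Y \<Longrightarrow> S (r *\<^sub>R x) = r * S x"
  unfolding S_def coef_scale using suminf_mult[OF coef_summable] by simp

lemma sigma_b: "\<sigma> (coef (b i)) n = (if i < n then 1 else 0)"
  unfolding coef_b \<sigma>_def by simp

lemma S_b: "S (b i) = 1"
  unfolding S_def coef_b using sums_unique[OF sums_single[of i "\<lambda>_. 1::real"]] by simp

lemma final:
  "\<exists>(f :: nat \<Rightarrow> ('a \<Rightarrow>\<^sub>L real)) (g :: nat \<Rightarrow> ('a \<Rightarrow>\<^sub>L real)).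
           bounded (range f) \<and> bounded (range g) \<and>
           (\<forall>i j. blinfun_apply (f i) (b j) = (if j \<ge> i then 1 else 0)) \<and>
           (\<forall>i j. blinfun_apply (g j) (b i) = (if j \<ge> i then 1 else 0))"
proof -
  obtain M where M0: "M \<ge> 0" and MB: "\<And>y. y \<in> Y \<Longrightarrow> nb (coef y) (M * norm y)"
    using main_bound by blast
  have sbd: "\<bar>\<sigma> (coef y) n\<bar> \<le> M * norm y" if "y \<in> Y" for y n using nb_sigma[OF MB[OF that]] .
  have Sbd: "\<bar>S y\<bar> \<le> M * norm y" if y: "y \<in> Y" for y
  proof -
    have "norm (S y) \<le> M * norm y"
      by (rule Lim_norm_ubound[OF trivial_limit_sequentially sigma_lim[OF y]])
        (use sbd[OF y] in \<open>auto intro!: always_eventually\<close>)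
    then show ?thesis by simp
  qed
  have Ysub: "subspace Y" by (rule Y_subspace)
  have "\<forall>i. \<exists>F :: 'a \<Rightarrow>\<^sub>L real. norm F \<le> 2 * M \<and> (\<forall>x\<in>Y. blinfun_apply F x = S x - \<sigma> (coef x) i)"
  proof
    fix i
    show "\<exists>F :: 'a \<Rightarrow>\<^sub>L real. norm F \<le> 2 * M \<and> (\<forall>x\<in>Y. blinfun_apply F x = S x - \<sigma> (coef x) i)"
    proof (rule hahn_banach[OF _ Ysub])
      show "0 \<le> 2 * M" using M0 by simp
      show "S (x + y) - \<sigma> (coef (x + y)) i = (S x - \<sigma> (coef x) i) + (S y - \<sigma> (coef y) i)"
        if "x \<in> Y" "y \<in> Y" for x y using S_add[OF that] sigma_add[OF that] by simp
      show "S (r *\<^sub>R x) - \<sigma> (coef (r *\<^sub>R x)) i = r * (S x - \<sigma> (coef x) i)"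
        if "x \<in> Y" for r x using S_scl[OF that] sigma_scl[OF that] by (simp add: algebra_simps)
      show "\<bar>S x - \<sigma> (coef x) i\<bar> \<le> 2 * M * norm x" if "x \<in> Y" for x
        using Sbd[OF that] sbd[OF that, of i] by linarith
    qed
  qed
  then obtain f where f: "\<And>i. norm (f i) \<le> 2 * M" "\<And>i x. x \<in> Y \<Longrightarrow> blinfun_apply (f i) x = S x - \<sigma> (coef x) i"
    by metis
  have "\<forall>j. \<exists>F :: 'a \<Rightarrow>\<^sub>L real. norm F \<le> M \<and> (\<forall>x\<in>Y. blinfun_apply F x = \<sigma> (coef x) (Suc j))"
  proof
    fix j
    show "\<exists>F :: 'a \<Rightarrow>\<^sub>L real. norm F \<le> M \<and> (\<forall>x\<in>Y. blinfun_apply F x = \<sigma> (coef x) (Suc j))"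
    proof (rule hahn_banach[OF M0 Ysub])
      show "\<sigma> (coef (x + y)) (Suc j) = \<sigma> (coef x) (Suc j) + \<sigma> (coef y) (Suc j)"
        if "x \<in> Y" "y \<in> Y" for x y using sigma_add[OF that] .
      show "\<sigma> (coef (r *\<^sub>R x)) (Suc j) = r * \<sigma> (coef x) (Suc j)"
        if "x \<in> Y" for r x using sigma_scl[OF that] .
      show "\<bar>\<sigma> (coef x) (Suc j)\<bar> \<le> M * norm x" if "x \<in> Y" for x
        using sbd[OF that] .
    qed
  qed
  then obtain g where g: "\<And>j. norm (g j) \<le> M" "\<And>j x. x \<in> Y \<Longrightarrow> blinfun_apply (g j) x = \<sigma> (coef x) (Suc j)"
    by metis
  have bf: "bounded (range f)" unfolding bounded_iff using f(1) by blast
  have bg: "bounded (range g)" unfolding bounded_iff using g(1) by blast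
  have fb: "blinfun_apply (f i) (b j) = (if j \<ge> i then 1 else 0)" for i j
    using f(2)[OF b_in_Y] S_b sigma_b by auto
  have gb: "blinfun_apply (g j) (b i) = (if j \<ge> i then 1 else 0)" for i j
    using g(2)[OF b_in_Y] sigma_b by auto
  show ?thesis using bf bg fb gb by blast
qed

end

theorem proposition9:
  fixes b :: "nat \<Rightarrow> 'a::banach"
  assumes "wide_s b"
  shows "\<exists>(f :: nat \<Rightarrow> ('a \<Rightarrow>\<^sub>L real)) (g :: nat \<Rightarrow> ('a \<Rightarrow>\<^sub>L real)).
           bounded (range f) \<and> bounded (range g) \<and>
           (\<forall>i j. blinfun_apply (f i) (b j) = (if j \<ge> i then 1 else 0)) \<and>
           (\<forall>i j. blinfun_apply (g j) (b i) = (if j \<ge> i then 1 else 0))"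
proof -
  interpret wides b by unfold_locales (rule assms)
  show ?thesis by (rule final)
qed

end
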